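(* Let $\alpha\in(0,1]$, $k\ge1$ an integer, and $\beta=1-(1-\alpha)^{1/k}$. Let $\mathcal{F}$ be a finite family of convex sets in $\mathbb{R}^d$ with $|\mathcal{F}|\ge k$, and let $b\in\mathbb{R}^d$. Assume that for at least an $\alpha$ fraction of the $k$-element subfamilies $\{K_1,\dots,K_k\}\subseteq\mathcal{F}$, the set $\bigcap_{i=1}^kK_i$ has a point in $B(b,1)$. Then there is $q\in\mathbb{R}^d$ such that at least $\beta|\mathcal{F}|$ elements of $\mathcal{F}$ intersect the ball $B(q,1/\sqrt k)$.
   Context: $B(p,\rho)$ is the closed Euclidean ball of centre $p$ and radius $\rho$. *)

theory Defs
  imports "HOL-Analysis.Analysis"
begin

end

theory Submission imports Defs "HOL-Combinatorics.Multiset_Permutations" begin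

lemma pyth:
  fixes b y :: "'a::euclidean_space"
  assumes "convex C" "closed C" "C \<noteq> {}" "y \<in> C"
  shows "(dist b y)^2 \<ge> (dist b (closest_point C b))^2 + (dist (closest_point C b) y)^2"
proof -
  define x where "x = closest_point C b"
  have xC: "x \<in> C" using closest_point_in_set assms x_def by blast
  have "inner (b - x) (y - x) \<le> 0"
    using any_closest_point_dot[OF assms(1,2) xC assms(4)] closest_point_exists(2)[OF assms(2,3)] x_def by blast
  moreover have "b - y = (b - x) - (y - x)" by simp
  ultimately have "(norm (b - y))^2 \<ge> (norm (b - x))^2 + (norm (y - x))^2"
    by (simp add: power2_norm_eq_inner inner_diff_left inner_diff_right inner_commute)
  then show ?thesis unfolding x_def[symmetric] by (simp add: dist_norm norm_minus_commute)
qed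

lemma dist_closure_miss:
  fixes c x :: "'a::euclidean_space"
  assumes "x \<in> closure K" "K \<inter> cball c r = {}"
  shows "dist c x \<ge> r"
proof (rule ccontr)
  assume "\<not> ?thesis"
  then obtain y where "y \<in> K" "dist y x < r - dist c x"
    using assms(1) unfolding closure_approachable by (metis diff_gt_0_iff_gt not_le)
  then have "dist c y \<le> r" by (smt (verit) dist_commute dist_triangle)
  then show False using assms(2) \<open>y \<in> K\<close> by auto
qed

definition xpt :: "'a::euclidean_space set list \<Rightarrow> 'a \<Rightarrow> 'a" where
  "xpt L b = closest_point (closure (\<Inter>(set L))) b"

definition ext :: "'a::euclidean_space set set \<Rightarrow> 'a \<Rightarrow> real \<Rightarrow> 'a set list \<Rightarrow> 'a set set" where
  "ext F b r L = (if \<Inter>(set L) = {} then F - set L else {K\<in>F. K \<inter> cball (xpt L b) r = {}})"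

fun chains :: "'a::euclidean_space set set \<Rightarrow> 'a \<Rightarrow> real \<Rightarrow> nat \<Rightarrow> 'a set list set" where
  "chains F b r 0 = {[]}"
| "chains F b r (Suc j) = (\<Union>L\<in>chains F b r j. (\<lambda>K. L @ [K]) ` ext F b r L)"

lemma meets:
  fixes b :: "'a::euclidean_space"
  assumes "K \<in> set L" "\<Inter>(set L) \<noteq> {}" "r > 0"
  shows "K \<inter> cball (xpt L b) r \<noteq> {}"
proof -
  have "xpt L b \<in> closure (\<Inter>(set L))" unfolding xpt_def
    by (rule closest_point_in_set) (use assms(2) in auto)
  also have "\<dots> \<subseteq> closure K" using assms(1) by (intro closure_mono) auto
  finally obtain y where "y \<in> K" "dist y (xpt L b) < r" using assms(3) unfolding closure_approachable by blast
  then show ?thesis by (auto simp: dist_commute)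
qed

lemma ext_sub: "ext F b r L \<subseteq> F - set L" if "r > 0"
  using meets[OF _ _ that] unfolding ext_def by auto

lemma ext_subF: "ext F b r L \<subseteq> F"
  unfolding ext_def by auto

lemma chains_props:
  assumes "L \<in> chains F b r j" "r > 0"
  shows "length L = j \<and> set L \<subseteq> F \<and> distinct L \<and> (\<forall>i<j. L!i \<in> ext F b r (take i L))"
  using assms(1)
proof (induction j arbitrary: L)
  case 0
  then show ?case by simp
next
  case (Suc j)
  then obtain L0 K where L: "L = L0 @ [K]" "L0 \<in> chains F b r j" "K \<in> ext F b r L0" by auto
  have IH: "length L0 = j \<and> set L0 \<subseteq> F \<and> distinct L0 \<and> (\<forall>i<j. L0!i \<in> ext F b r (take i L0))"
    using Suc.IH L(2) by blast
  have K: "K \<in> F - set L0" using ext_sub[OF assms(2)] L(3) by blast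
  have "\<forall>i<Suc j. L!i \<in> ext F b r (take i L)"
  proof (intro allI impI)
    fix i assume "i < Suc j"
    then consider "i < j" | "i = j" by linarith
    then show "L!i \<in> ext F b r (take i L)"
    proof cases
      case 1 then show ?thesis using IH L(1) by (simp add: nth_append)
    next
      case 2 then show ?thesis using IH L(1,3) by (simp add: nth_append)
    qed
  qed
  then show ?case using IH K L(1) by auto
qed

lemma chain_bad:
  fixes b :: "'a::euclidean_space"
  assumes conv: "\<forall>K\<in>F. convex K" and k: "k \<ge> 1" and r: "r = 1 / sqrt k" and len: "length L = k"
    and sub: "set L \<subseteq> F" and ch: "\<forall>i<k. L!i \<in> ext F b r (take i L)"
  shows "\<Inter>(set L) \<inter> cball b 1 = {}"
proof -
  have rpos: "r > 0" using r k by simp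
  have r2: "r^2 = 1 / k" using r k by (simp add: power_divide)
  have cv: "convex (\<Inter>(set (take i L)))" for i
    using conv sub set_take_subset[of i L] by (intro convex_Inter) auto
  have step: "(dist b (xpt (take (Suc i) L) b))^2 \<ge> (dist b (xpt (take i L) b))^2 + r^2
     \<and> (\<forall>y\<in>\<Inter>(set (take (Suc i) L)). (dist b y)^2 > (dist b (xpt (take i L) b))^2 + r^2)"
    if i: "i < k" and alive: "\<Inter>(set (take (Suc i) L)) \<noteq> {}" for i
  proof -
    define T where "T = take i L"
    define K where "K = L!i"
    have tk: "take (Suc i) L = T @ [K]" using i len by (simp add: T_def K_def take_Suc_conv_app_nth)
    have I: "\<Inter>(set (take (Suc i) L)) = K \<inter> \<Inter>(set T)" using tk by simp
    have aT: "\<Inter>(set T) \<noteq> {}" using alive I by auto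
    have "K \<in> ext F b r T" using ch i unfolding K_def T_def by auto
    then have Kmiss: "K \<inter> cball (xpt T b) r = {}" using aT unfolding ext_def by auto
    define C where "C = closure (\<Inter>(set T))"
    have C: "convex C" "closed C" "C \<noteq> {}" using cv aT unfolding C_def T_def
      by (auto simp: convex_closure)
    have xT: "xpt T b = closest_point C b" unfolding xpt_def C_def by simp
    have y1: "(dist b y)^2 \<ge> (dist b (xpt T b))^2 + (dist (xpt T b) y)^2" if "y \<in> C" for y
      using pyth[OF C that] xT by simp
    have p1: "(dist b (xpt (take (Suc i) L) b))^2 \<ge> (dist b (xpt T b))^2 + r^2"
    proof -
      define x' where "x' = xpt (take (Suc i) L) b"
      have "x' \<in> closure (K \<inter> \<Inter>(set T))" unfolding x'_def xpt_def I
        by (rule closest_point_in_set) (use alive I in auto)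
      then have x'C: "x' \<in> C" and x'K: "x' \<in> closure K"
        unfolding C_def using closure_mono[of "K \<inter> \<Inter>(set T)"] by blast+
      have "dist (xpt T b) x' \<ge> r" using dist_closure_miss[OF x'K Kmiss] .
      then have "(dist (xpt T b) x')^2 \<ge> r^2" using rpos by (simp add: power_mono)
      then show ?thesis using y1[OF x'C] unfolding x'_def by linarith
    qed
    have p2: "(dist b y)^2 > (dist b (xpt T b))^2 + r^2" if "y \<in> \<Inter>(set (take (Suc i) L))" for y
    proof -
      have yK: "y \<in> K" and yT: "y \<in> \<Inter>(set T)" using that I by auto
      have yC: "y \<in> C" using yT closure_subset unfolding C_def by blast
      have "dist (xpt T b) y > r" using Kmiss yK by (auto simp: dist_commute)
      then have "(dist (xpt T b) y)^2 > r^2" using rpos by (simp add: power_strict_mono)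
      then show ?thesis using y1[OF yC] by linarith
    qed
    show ?thesis using p1 p2 unfolding T_def by blast
  qed
  have claim: "\<Inter>(set (take i L)) \<noteq> {} \<longrightarrow> (dist b (xpt (take i L) b))^2 \<ge> i * r^2" if "i \<le> k" for i
    using that
  proof (induction i)
    case 0 then show ?case by simp
  next
    case (Suc i)
    show ?case
    proof
      assume a: "\<Inter>(set (take (Suc i) L)) \<noteq> {}"
      have "\<Inter>(set (take (Suc i) L)) \<subseteq> \<Inter>(set (take i L))"
        using set_take_subset_set_take[of i "Suc i" L] by auto
      then have "\<Inter>(set (take i L)) \<noteq> {}" using a by blast
      then have "(dist b (xpt (take i L) b))^2 \<ge> i * r^2" using Suc by simp
      then show "(dist b (xpt (take (Suc i) L) b))^2 \<ge> Suc i * r^2"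
        using step[of i] a Suc.prems by (simp add: algebra_simps)
    qed
  qed
  show ?thesis
  proof (rule ccontr)
    assume "\<not> ?thesis"
    then obtain y where y: "y \<in> \<Inter>(set L)" "dist b y \<le> 1" by auto
    define i where "i = k - 1"
    have i: "i < k" "Suc i = k" using k unfolding i_def by auto
    have tkL: "take (Suc i) L = L" using i len by simp
    have "\<Inter>(set L) \<subseteq> \<Inter>(set (take i L))" using set_take_subset[of i L] by auto
    then have "(dist b (xpt (take i L) b))^2 \<ge> i * r^2" using claim[of i] i y by auto
    moreover have "(dist b y)^2 > (dist b (xpt (take i L) b))^2 + r^2"
      using step[OF i(1)] y tkL by auto
    ultimately have "(dist b y)^2 > Suc i * r^2" by (simp add: algebra_simps)
    also have "Suc i * r^2 = 1" using i r2 k by simp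
    finally have "1 < (dist b y)^2" .
    moreover have "(dist b y)^2 \<le> 1" using y(2) by (simp add: power_le_one)
    ultimately show False by simp
  qed
qed

theorem theorem4p4:
  fixes \<alpha> \<beta> :: real and k :: nat and F :: "'a::euclidean_space set set" and b :: 'a
  assumes "0 < \<alpha>" "\<alpha> \<le> 1" "k \<ge> 1"
    and "\<beta> = 1 - (1 - \<alpha>) powr (1 / real k)"
    and "finite F" "card F \<ge> k" "\<forall>K\<in>F. convex K"
    and "real (card {S. S \<subseteq> F \<and> card S = k \<and> \<Inter>S \<inter> cball b 1 \<noteq> {}})
           \<ge> \<alpha> * real (card F choose k)"
  shows "\<exists>q. real (card {K\<in>F. K \<inter> cball q (1 / sqrt (real k)) \<noteq> {}}) \<ge> \<beta> * real (card F)"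
proof (rule ccontr)
  assume H: "\<not> ?thesis"
  define n where "n = card F"
  define c where "c = (1 - \<alpha>) powr (1 / real k)"
  define r where "r = 1 / sqrt (real k)"
  have fin: "finite F" and kn: "k \<le> n" and k1: "k \<ge> 1" using assms n_def by auto
  have rpos: "r > 0" using k1 r_def by simp
  have beta: "\<beta> = 1 - c" using assms(4) c_def by simp
  have Hq: "real (card {K\<in>F. K \<inter> cball q r \<noteq> {}}) < (1 - c) * n" for q
    using H beta unfolding r_def n_def by (auto simp: not_le)
  have c0: "0 \<le> c" unfolding c_def by simp
  have c1: "c < 1"
  proof (cases "\<alpha> = 1")
    case True then show ?thesis unfolding c_def by simp
  next
    case False
    then have "(1 - \<alpha>) powr (1 / real k) < 1 powr (1 / real k)"
      using assms(1,2) k1 by (intro powr_less_mono2) auto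
    then show ?thesis unfolding c_def by simp
  qed
  have ck: "c ^ k = 1 - \<alpha>"
  proof (cases "\<alpha> = 1")
    case True then show ?thesis unfolding c_def using k1 by simp
  next
    case False
    then have pos: "1 - \<alpha> > 0" using assms(2) by simp
    then have "c ^ k = c powr (real k)" unfolding c_def by (simp add: powr_realpow)
    also have "\<dots> = (1 - \<alpha>) powr (1 / real k * real k)" unfolding c_def by (simp add: powr_powr)
    also have "\<dots> = 1 - \<alpha>" using k1 pos by simp
    finally show ?thesis .
  qed
  have bad: "real (card {K\<in>F. K \<inter> cball q r = {}}) > c * n" for q
  proof -
    have "{K\<in>F. K \<inter> cball q r = {}} \<union> {K\<in>F. K \<inter> cball q r \<noteq> {}} = F" by auto
    then have "card {K\<in>F. K \<inter> cball q r = {}} + card {K\<in>F. K \<inter> cball q r \<noteq> {}} = n"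
      unfolding n_def using fin by (subst card_Un_disjoint[symmetric]) auto
    then show ?thesis using Hq[of q] by (simp add: algebra_simps)
  qed
  have extcard: "real (card (ext F b r L)) > c * (real n - real j)"
    if L: "L \<in> chains F b r j" and j: "j < k" for L j
  proof -
    have P: "length L = j" "set L \<subseteq> F" "distinct L" using chains_props[OF L rpos] by auto
    have cs: "card (set L) = j" using P distinct_card by metis
    show ?thesis
    proof (cases "\<Inter>(set L) = {}")
      case True
      then have "ext F b r L = F - set L" unfolding ext_def by simp
      then have "card (ext F b r L) = n - j" using P(2) cs fin n_def by (simp add: card_Diff_subset finite_subset)
      moreover have "real n - real j > 0" using j kn by simp
      ultimately show ?thesis using c1 kn j by (simp add: of_nat_diff mult_less_cancel_right1)
    next
      case False
      then have "ext F b r L = {K\<in>F. K \<inter> cball (xpt L b) r = {}}" unfolding ext_def by simp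
      moreover have "c * (real n - real j) \<le> c * n" using c0 by (simp add: mult_left_mono)
      ultimately show ?thesis using bad[of "xpt L b"] by simp
    qed
  qed
  have finch: "finite (chains F b r j)" for j
  proof -
    have "chains F b r j \<subseteq> {L. set L \<subseteq> F \<and> length L = j}" using chains_props[OF _ rpos] by blast
    then show ?thesis using finite_lists_length_eq[OF fin] finite_subset by blast
  qed
  have cardS: "card (chains F b r (Suc j)) = (\<Sum>L\<in>chains F b r j. card (ext F b r L))" for j
  proof -
    have "card (chains F b r (Suc j)) = (\<Sum>L\<in>chains F b r j. card ((\<lambda>K. L @ [K]) ` ext F b r L))"
      unfolding chains.simps
    proof (rule card_UN_disjoint[OF finch])
      show "\<forall>L\<in>chains F b r j. finite ((\<lambda>K. L @ [K]) ` ext F b r L)"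
        using finite_subset[OF ext_subF fin] by blast
      show "\<forall>L\<in>chains F b r j. \<forall>L'\<in>chains F b r j. L \<noteq> L' \<longrightarrow>
        ((\<lambda>K. L @ [K]) ` ext F b r L) \<inter> ((\<lambda>K. L' @ [K]) ` ext F b r L') = {}" by auto
    qed
    also have "\<dots> = (\<Sum>L\<in>chains F b r j. card (ext F b r L))"
      by (intro sum.cong refl card_image) (auto simp: inj_on_def)
    finally show ?thesis .
  qed
  have strict: "real (card (chains F b r (Suc j))) > real (card (chains F b r j)) * (c * (real n - real j))"
    if j: "j < k" and ne: "chains F b r j \<noteq> {}" for j
  proof -
    have "(\<Sum>L\<in>chains F b r j. c * (real n - real j)) < (\<Sum>L\<in>chains F b r j. real (card (ext F b r L)))"
      by (rule sum_strict_mono[OF finch ne], rule extcard[OF _ j])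
    then show ?thesis unfolding cardS of_nat_sum by (simp add: mult.commute)
  qed
  have fr: "fact n / fact (n - j) * (real n - real j) = fact n / fact (n - Suc j)" if "j < n" for j
  proof -
    have e: "real (n - j) = real n - real j" using that by (simp add: of_nat_diff)
    have s: "n - j = Suc (n - Suc j)" using that by simp
    have f0: "(fact (n - j)::real) = real (Suc (n - Suc j)) * fact (n - Suc j)" unfolding s by (rule fact_Suc)
    have e2: "real (Suc (n - Suc j)) = real n - real j" unfolding s[symmetric] using e .
    have f: "(fact (n - j)::real) = (real n - real j) * fact (n - Suc j)" using f0 e2 by simp
    have p: "real n - real j > 0" using that by simp
    show ?thesis unfolding f using p by (simp add: field_simps)
  qed
  have ind: "chains F b r j \<noteq> {} \<and> real (card (chains F b r j)) \<ge> c ^ j * (fact n / fact (n - j))"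
    if "j \<le> k" for j
    using that
  proof (induction j)
    case 0 then show ?case by simp
  next
    case (Suc j)
    then have j: "j < k" and IH: "chains F b r j \<noteq> {}" "real (card (chains F b r j)) \<ge> c ^ j * (fact n / fact (n - j))"
      by auto
    have nj: "c * (real n - real j) \<ge> 0" using c0 j kn by simp
    have s: "real (card (chains F b r (Suc j))) > real (card (chains F b r j)) * (c * (real n - real j))"
      using strict[OF j IH(1)] .
    have "c ^ j * (fact n / fact (n - j)) * (c * (real n - real j)) \<le> real (card (chains F b r j)) * (c * (real n - real j))"
      using IH(2) nj by (rule mult_right_mono)
    moreover have "c ^ j * (fact n / fact (n - j)) * (c * (real n - real j)) = c ^ Suc j * (fact n / fact (n - Suc j))"
    proof -
      have "c ^ j * (fact n / fact (n - j)) * (c * (real n - real j)) = c ^ Suc j * (fact n / fact (n - j) * (real n - real j))"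
        by (simp only: power_Suc mult_ac)
      also have "\<dots> = c ^ Suc j * (fact n / fact (n - Suc j))" using fr[of j] j kn by simp
      finally show ?thesis .
    qed
    ultimately have "real (card (chains F b r (Suc j))) > c ^ Suc j * (fact n / fact (n - Suc j))" using s by linarith
    moreover then have "chains F b r (Suc j) \<noteq> {}"
      using c0 by (metis card.empty not_less of_nat_0 zero_le_mult_iff zero_le_power divide_nonneg_nonneg fact_ge_zero)
    ultimately show ?case by simp
  qed
  have lower: "real (card (chains F b r k)) > c ^ k * (fact n / fact (n - k))"
  proof -
    obtain j where jk: "k = Suc j" using k1 by (cases k) auto
    then have j: "j < k" by simp
    have IH: "chains F b r j \<noteq> {}" "real (card (chains F b r j)) \<ge> c ^ j * (fact n / fact (n - j))"
      using ind[of j] j by auto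
    have nj: "c * (real n - real j) \<ge> 0" using c0 j kn by simp
    have "c ^ j * (fact n / fact (n - j)) * (c * (real n - real j)) \<le> real (card (chains F b r j)) * (c * (real n - real j))"
      using IH(2) nj by (rule mult_right_mono)
    moreover have "c ^ j * (fact n / fact (n - j)) * (c * (real n - real j)) = c ^ Suc j * (fact n / fact (n - Suc j))"
    proof -
      have "c ^ j * (fact n / fact (n - j)) * (c * (real n - real j)) = c ^ Suc j * (fact n / fact (n - j) * (real n - real j))"
        by (simp only: power_Suc mult_ac)
      also have "\<dots> = c ^ Suc j * (fact n / fact (n - Suc j))" using fr[of j] j kn by simp
      finally show ?thesis .
    qed
    ultimately show ?thesis using strict[OF j IH(1)] jk by simp
  qed
  define Sbad where "Sbad = {S. S \<subseteq> F \<and> card S = k \<and> \<Inter>S \<inter> cball b 1 = {}}"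
  define Sgood where "Sgood = {S. S \<subseteq> F \<and> card S = k \<and> \<Inter>S \<inter> cball b 1 \<noteq> {}}"
  have finS: "finite Sbad" "finite Sgood" unfolding Sbad_def Sgood_def using fin
    by (auto intro: finite_subset[of _ "Pow F"])
  have "card Sbad + card Sgood = n choose k"
  proof -
    have "Sbad \<union> Sgood = {S. S \<subseteq> F \<and> card S = k}" unfolding Sbad_def Sgood_def by auto
    moreover have "Sbad \<inter> Sgood = {}" unfolding Sbad_def Sgood_def by auto
    ultimately show ?thesis using card_Un_disjoint[OF finS] n_subsets[OF fin] n_def by metis
  qed
  then have cSbad: "real (card Sbad) \<le> (1 - \<alpha>) * real (n choose k)"
    using assms(8) unfolding Sgood_def n_def[symmetric] by (simp add: algebra_simps)
  have sub: "chains F b r k \<subseteq> (\<Union>S\<in>Sbad. permutations_of_set S)"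
  proof
    fix L assume L: "L \<in> chains F b r k"
    have P: "length L = k" "set L \<subseteq> F" "distinct L" "\<forall>i<k. L!i \<in> ext F b r (take i L)"
      using chains_props[OF L rpos] by auto
    have "\<Inter>(set L) \<inter> cball b 1 = {}" using chain_bad[OF assms(7) k1 r_def P(1,2,4)] .
    moreover have "card (set L) = k" using P distinct_card by metis
    ultimately have "set L \<in> Sbad" using P unfolding Sbad_def by auto
    then show "L \<in> (\<Union>S\<in>Sbad. permutations_of_set S)" using P(3) by (auto simp: permutations_of_set_def)
  qed
  have "card (chains F b r k) \<le> card (\<Union>S\<in>Sbad. permutations_of_set S)"
    by (rule card_mono[OF _ sub]) (use finS in \<open>simp add: finite_permutations_of_set\<close>)
  also have "\<dots> \<le> (\<Sum>S\<in>Sbad. card (permutations_of_set S))" by (rule card_UN_le[OF finS(1)])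
  also have "\<dots> = (\<Sum>S\<in>Sbad. fact k)"
  proof (intro sum.cong refl)
    fix S assume "S \<in> Sbad"
    then have "S \<subseteq> F" "card S = k" unfolding Sbad_def by auto
    then show "card (permutations_of_set S) = fact k" using finite_subset[OF _ fin] by simp
  qed
  also have "\<dots> = card Sbad * fact k" by simp
  finally have "real (card (chains F b r k)) \<le> real (card Sbad) * fact k" by (metis of_nat_fact of_nat_le_iff of_nat_mult)
  also have "\<dots> \<le> (1 - \<alpha>) * real (n choose k) * fact k" using cSbad by (simp add: mult_right_mono)
  also have "\<dots> = (1 - \<alpha>) * (fact n / fact (n - k))" using kn by (simp add: binomial_fact)
  finally show False using lower ck by simp
qed

end
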